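(* For every positive integer $n$, let $L_n(q)=\operatorname{lcm}\left({n\brack 0}_q,{n\brack 1}_q,\ldots,{n\brack n}_q\right)\in\mathbb{Z}[q]$. Then $$L_n(1)=\lim_{q\to1}L_n(q)=\operatorname{lcm}\left(\binom{n}{0},\binom{n}{1},\ldots,\binom{n}{n}\right).$$ *)

theory Defs
  imports Complex_Main "HOL-Computational_Algebra.Polynomial_Factorial"
begin

fun qbinom :: "nat \<Rightarrow> nat \<Rightarrow> int poly" where
  "qbinom 0 0 = 1"
| "qbinom 0 (Suc k) = 0"
| "qbinom (Suc n) 0 = 1"
| "qbinom (Suc n) (Suc k) = qbinom n k + monom 1 (Suc k) * qbinom n (Suc k)"

text \<open>L_n(q) = lcm of the q-binomials [n,0]_q, ..., [n,n]_q in Z[q]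
  (normalized lcm, i.e. positive leading coefficient).\<close>
definition Lq :: "nat \<Rightarrow> int poly" where
  "Lq n = Lcm (qbinom n ` {0..n})"

end

theory Submission
  imports Defs "HOL-Computational_Algebra.Primes"
begin

definition XX :: "nat \<Rightarrow> int poly" where "XX m = monom 1 m - 1"

function cyc :: "nat \<Rightarrow> int poly" where
"cyc n = (if n = 0 then 1 else XX n div (\<Prod>d\<in>{d. d dvd n \<and> d < n}. cyc d))"
  by auto
termination by (relation "measure id") auto

declare cyc.simps[simp del]

lemma XX_geom: "XX (a * k) = XX a * (\<Sum>i<k. monom 1 (a*i))"
proof (induction k)
  case 0 then show ?case by (simp add: XX_def)
next
  case (Suc k)
  have "XX (a * Suc k) = XX (a*k) + monom 1 (a*k) * XX a"
    by (simp add: XX_def algebra_simps mult_monom)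
  then show ?case using Suc by (simp add: algebra_simps)
qed

lemma XX_dvd: "XX a dvd XX (a * k)"
  using XX_geom by simp

lemma XX_dvd': "a dvd b \<Longrightarrow> XX a dvd XX b"
  using XX_dvd by (auto simp: dvd_def)

lemma XX_add: "XX (a + b) = monom 1 b * XX a + XX b"
  by (simp add: XX_def algebra_simps mult_monom)

lemma XX_nz: "m \<ge> 1 \<Longrightarrow> XX m \<noteq> 0"
proof
  assume "m \<ge> 1" "XX m = 0"
  then have "coeff (XX m) m = 0" by simp
  with \<open>m \<ge> 1\<close> show False by (simp add: XX_def)
qed

lemma lead_XX: "m \<ge> 1 \<Longrightarrow> lead_coeff (XX m) = 1"
proof -
  assume m: "m \<ge> 1"
  have c: "coeff (XX m) m = 1" using m by (simp add: XX_def)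
  have "degree (XX m) \<le> m" unfolding XX_def
    by (rule degree_diff_le) (auto simp: degree_monom_eq)
  moreover have "m \<le> degree (XX m)" using c by (intro le_degree) simp
  ultimately have "degree (XX m) = m" by simp
  then show ?thesis using m by (simp add: XX_def)
qed

lemma XX_sqfree:
  assumes m: "m \<ge> 1" and d: "g * g dvd XX m"
  shows "is_unit g"
proof -
  obtain h where h: "XX m = g * g * h" using d by (auto simp: dvd_def)
  have pd: "pderiv (XX m) = monom (of_nat m) (m - 1)"
    by (simp add: XX_def pderiv_diff pderiv_monom)
  have "pderiv (XX m) = g * (2 * pderiv g * h + g * pderiv h)"
    unfolding h by (simp add: pderiv_mult algebra_simps)
  then have g1: "g dvd monom (of_nat m) (m - 1)" using pd by (metis dvd_triv_left)
  have g2: "g dvd XX m" using d by (metis dvd_mult_left)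
  have "monom 1 1 * monom (of_nat m) (m - 1) - smult (of_nat m) (XX m) = [:of_nat m:]"
    using m by (simp add: XX_def mult_monom algebra_simps smult_diff_right monom_0 smult_monom)
  moreover have "g dvd monom 1 1 * monom (of_nat m) (m - 1) - smult (of_nat m) (XX m)"
    using g1 g2 by (simp add: dvd_diff smult_dvd_cancel dvd_smult)
  ultimately have g3: "g dvd [:int m:]" by simp
  have "degree g = 0" using dvd_imp_degree_le[OF g3] m by simp
  then obtain c where c: "g = [:c:]" by (metis degree_eq_zeroE)
  have "c dvd coeff (XX m) m" using g2 c const_poly_dvd_iff by blast
  then have "c dvd 1" using m by (simp add: XX_def)
  then show ?thesis using c is_unit_const_poly_iff by metis
qed

lemma fin_div: "m \<ge> 1 \<Longrightarrow> finite {d::nat. d dvd m}"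
  by simp



lemma cop_aux:
  assumes H: "\<And>m. 1 \<le> m \<Longrightarrow> m \<le> e \<Longrightarrow> XX m = (\<Prod>d\<in>{d. d dvd m}. cyc d)"
    and e: "e \<ge> 1" and d: "d \<ge> 1" and nd: "\<not> e dvd d"
  shows "coprime (cyc e) (XX d)"
proof (rule coprimeI)
  fix h assume h1: "h dvd cyc e" and h2: "h dvd XX d"
  define g where "g = gcd e d"
  have g1: "g \<ge> 1" using e by (simp add: g_def Suc_le_eq)
  have ge: "g dvd e" by (simp add: g_def)
  have gle: "g \<le> e" using ge e by (simp add: dvd_imp_le)
  have gne: "g \<noteq> e" using nd by (metis g_def gcd_dvd2)
  obtain u v where uv: "e * u = d * v + g" using bezout_nat[of e d] e unfolding g_def by auto
  have fe: "finite {c. c dvd e}" using fin_div e by simp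
  have He: "XX e = (\<Prod>c\<in>{c. c dvd e}. cyc c)" using H[of e] e by simp
  have ce: "cyc e dvd XX e" unfolding He by (rule dvd_prodI[OF fe]) simp
  have "h dvd XX (e*u)" using dvd_trans[OF h1 dvd_trans[OF ce XX_dvd]] .
  then have "h dvd monom 1 g * XX (d*v) + XX g" using uv XX_add[of "d*v" g] by (simp add: add.commute)
  moreover have "h dvd monom 1 g * XX (d*v)" using dvd_trans[OF h2 XX_dvd] by (rule dvd_mult)
  ultimately have hg: "h dvd XX g" by (simp add: dvd_add_right_iff)
  have "XX g = (\<Prod>c\<in>{c. c dvd g}. cyc c)" using H[OF g1 gle] .
  also have "\<dots> dvd (\<Prod>c\<in>{c. c dvd e} - {e}. cyc c)"
  proof (rule prod_dvd_prod_subset)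
    show "finite ({c. c dvd e} - {e})" using fe by simp
    show "{c. c dvd g} \<subseteq> {c. c dvd e} - {e}"
    proof
      fix c assume "c \<in> {c. c dvd g}"
      then have "c dvd g" by simp
      then have "c dvd e" "c \<le> g" using ge g1 dvd_trans[of c g e] dvd_imp_le[of c g] by auto
      then show "c \<in> {c. c dvd e} - {e}" using gle gne by auto
    qed
  qed
  finally have "cyc e * XX g dvd cyc e * (\<Prod>c\<in>{c. c dvd e} - {e}. cyc c)" by simp
  also have "\<dots> = XX e" unfolding He using prod.remove[OF fe, of e cyc] by simp
  finally have hh: "cyc e * XX g dvd XX e" .
  have "h * h dvd XX e" by (rule dvd_trans[OF mult_dvd_mono[OF h1 hg] hh])
  then show "is_unit h" using XX_sqfree e by blast
qed


lemma prod_pw_coprime_dvd: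
  fixes f :: "'b \<Rightarrow> 'a::semiring_gcd"
  shows "finite A \<Longrightarrow> (\<And>i. i\<in>A \<Longrightarrow> f i dvd c) \<Longrightarrow>
    (\<And>i j. i\<in>A \<Longrightarrow> j\<in>A \<Longrightarrow> i\<noteq>j \<Longrightarrow> coprime (f i) (f j)) \<Longrightarrow> prod f A dvd c"
proof (induction A rule: finite_induct)
  case empty then show ?case by simp
next
  case (insert x F)
  have "coprime (f x) (prod f F)"
    by (rule prod_coprime_right) (use insert in auto)
  moreover have "prod f F dvd c" using insert by auto
  moreover have "f x dvd c" using insert by auto
  ultimately show ?case using insert by (simp add: divides_mult)
qed

lemma cyc_coprime_aux:
  assumes H: "\<And>m. 1 \<le> m \<Longrightarrow> m \<le> N \<Longrightarrow> XX m = (\<Prod>d\<in>{d. d dvd m}. cyc d)"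
    and "d \<le> N" "e \<le> N" "d \<ge> 1" "e \<ge> 1" "d \<noteq> e"
  shows "coprime (cyc d) (cyc e)"
proof -
  have cd: "cyc k dvd XX k" if "1 \<le> k" "k \<le> N" for k
  proof -
    have "XX k = (\<Prod>d\<in>{d. d dvd k}. cyc d)" using H that by simp
    moreover have "cyc k dvd (\<Prod>d\<in>{d. d dvd k}. cyc d)" by (rule dvd_prodI[OF fin_div[OF that(1)]]) simp
    ultimately show ?thesis by simp
  qed
  consider "\<not> e dvd d" | "\<not> d dvd e" using assms(6) dvd_antisym by blast
  then show ?thesis
  proof cases
    case 1
    have "coprime (cyc e) (XX d)" by (rule cop_aux) (use H assms 1 in auto)
    then have "coprime (cyc e) (cyc d)" using cd[of d] assms coprime_divisors[of "cyc e" "cyc e" "cyc d" "XX d"] by auto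
    then show ?thesis by (simp add: coprime_commute)
  next
    case 2
    have "coprime (cyc d) (XX e)" by (rule cop_aux) (use H assms 2 in auto)
    then show ?thesis using cd[of e] assms coprime_divisors[of "cyc d" "cyc d" "cyc e" "XX e"] by auto
  qed
qed

lemma divs_remove: "m \<ge> 1 \<Longrightarrow> {d::nat. d dvd m} - {m} = {d. d dvd m \<and> d < m}"
  by (auto dest: dvd_imp_le)

lemma cyc_prod: "m \<ge> 1 \<Longrightarrow> XX m = (\<Prod>d\<in>{d. d dvd m}. cyc d)"
proof (induction m rule: less_induct)
  case (less m)
  define Q where "Q = (\<Prod>d\<in>{d. d dvd m \<and> d < m}. cyc d)"
  have fin: "finite {d. d dvd m \<and> d < m}" by simp
  have "Q dvd XX m" unfolding Q_def
  proof (rule prod_pw_coprime_dvd[OF fin])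
    fix i assume i: "i \<in> {d. d dvd m \<and> d < m}"
    then have i1: "i \<ge> 1" using less.prems by (auto intro: Suc_leI dvd_pos_nat)
    have "XX i = (\<Prod>d\<in>{d. d dvd i}. cyc d)" using less.IH i i1 by auto
    moreover have "cyc i dvd (\<Prod>d\<in>{d. d dvd i}. cyc d)" by (rule dvd_prodI[OF fin_div[OF i1]]) simp
    ultimately have "cyc i dvd XX i" by simp
    then show "cyc i dvd XX m" using XX_dvd' i dvd_trans by blast
  next
    fix i j assume i: "i \<in> {d. d dvd m \<and> d < m}" and j: "j \<in> {d. d dvd m \<and> d < m}" and "i \<noteq> j"
    then have "i \<ge> 1" "j \<ge> 1" using less.prems by (auto intro: Suc_leI dvd_pos_nat)
    then show "coprime (cyc i) (cyc j)"
      by (rule_tac N="m - 1" in cyc_coprime_aux) (use less.IH i j \<open>i \<noteq> j\<close> in auto)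
  qed
  have c: "cyc m = XX m div Q" using less.prems by (subst cyc.simps) (simp add: Q_def)
  have "XX m = cyc m * Q" using \<open>Q dvd XX m\<close> unfolding c by simp
  also have "\<dots> = (\<Prod>d\<in>{d. d dvd m}. cyc d)"
    using prod.remove[OF fin_div[OF less.prems], of m cyc] divs_remove[OF less.prems] by (simp add: Q_def)
  finally show ?case .
qed


lemma cyc_coprime: "d \<ge> 1 \<Longrightarrow> e \<ge> 1 \<Longrightarrow> d \<noteq> e \<Longrightarrow> coprime (cyc d) (cyc e)"
  by (rule cyc_coprime_aux[where N="max d e"]) (auto intro: cyc_prod)


lemma cyc_split: "m \<ge> 1 \<Longrightarrow> XX m = cyc m * (\<Prod>d\<in>{d. d dvd m \<and> d < m}. cyc d)"
  using cyc_prod prod.remove[OF fin_div, of m m cyc] divs_remove by simp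


lemma cyc_monic: "m \<ge> 1 \<Longrightarrow> lead_coeff (cyc m) = 1"
proof (induction m rule: less_induct)
  case (less m)
  have "lead_coeff (\<Prod>d\<in>{d. d dvd m \<and> d < m}. cyc d) = 1"
    unfolding lead_coeff_prod
    by (rule prod.neutral) (use less in \<open>auto intro: Suc_leI dvd_pos_nat\<close>)
  then show ?case using cyc_split[OF less.prems] lead_XX[OF less.prems]
    by (metis lead_coeff_mult mult.right_neutral)
qed


lemma cyc_nz: "m \<ge> 1 \<Longrightarrow> cyc m \<noteq> 0"
  using cyc_monic by fastforce


lemma cyc_one: "cyc 1 = XX 1"
proof -
  have "{d::nat. d dvd 1} = {1}" by auto
  then show ?thesis using cyc_prod[of 1] by simp
qed


lemma poly_sum_monom: "poly (\<Sum>i<k. monom (1::int) (a*i)) 1 = int k"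
  by (simp add: poly_sum poly_monom)


lemma prod_gt1: "m \<ge> 1 \<Longrightarrow> poly (\<Prod>d\<in>{d. d dvd m \<and> d > 1}. cyc d) 1 = int m"
proof -
  assume m: "m \<ge> 1"
  have s: "{d. d dvd m \<and> d > 1} = {d. d dvd m} - {1}" using m by auto
  have e1: "XX m = XX 1 * (\<Prod>d\<in>{d. d dvd m \<and> d > 1}. cyc d)"
    using cyc_prod[OF m] prod.remove[OF fin_div[OF m], of 1 cyc] s cyc_one by simp
  have e2: "XX m = XX 1 * (\<Sum>i<m. monom 1 (1*i))" using XX_geom[of 1 m] by simp
  have "XX 1 * (\<Prod>d\<in>{d. d dvd m \<and> d > 1}. cyc d) = XX 1 * (\<Sum>i<m. monom 1 (1*i))"
    by (rule trans[OF e1[symmetric] e2])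
  then have "(\<Prod>d\<in>{d. d dvd m \<and> d > 1}. cyc d) = (\<Sum>i<m. monom 1 (1*i))"
    using XX_nz[of 1] by auto
  then show ?thesis by (simp add: poly_sum poly_monom)
qed


lemma cyc_pos: "m \<ge> 2 \<Longrightarrow> poly (cyc m) 1 > 0"
proof (induction m rule: less_induct)
  case (less m)
  have m1: "m \<ge> 1" using less by simp
  have m0: "0 < m" using m1 by simp
  have s: "{d. d dvd m \<and> d > 1} = insert m {d. d dvd m \<and> 1 < d \<and> d < m}" using less.prems m0 by (auto dest: dvd_imp_le)
  have fin: "finite {d. d dvd m \<and> 1 < d \<and> d < m}" by simp
  have "poly (\<Prod>d\<in>{d. d dvd m \<and> d > 1}. cyc d) 1 = poly (cyc m) 1 * (\<Prod>d\<in>{d. d dvd m \<and> 1 < d \<and> d < m}. poly (cyc d) 1)"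
    unfolding s by (subst prod.insert[OF fin]) (auto simp: poly_prod)
  moreover have "(\<Prod>d\<in>{d. d dvd m \<and> 1 < d \<and> d < m}. poly (cyc d) 1) > 0"
    by (rule prod_pos) (use less.IH in auto)
  moreover have "poly (\<Prod>d\<in>{d. d dvd m \<and> d > 1}. cyc d) 1 > 0" using prod_gt1[OF m1] m1 by simp
  ultimately show ?case by (auto simp: zero_less_mult_iff)
qed


lemma cyc_dvd_prime:
  assumes d: "d \<ge> 1" and q: "prime (q::nat)" and qd: "q dvd d"
  shows "poly (cyc d) 1 dvd int q"
proof -
  obtain m where dm: "d = m * q" using qd by (auto simp: dvd_def mult.commute)
  have m1: "m \<ge> 1" using d dm by (cases m) auto
  have mlt: "m < d" using dm q m1 prime_gt_1_nat by auto
  define S where "S = (\<Sum>i<q. monom (1::int) (m*i))"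
  have XXd: "XX d = XX m * S" using XX_geom[of m q] dm by (simp add: S_def)
  have "XX m = (\<Prod>c\<in>{c. c dvd m}. cyc c)" using cyc_prod[OF m1] .
  also have "\<dots> dvd (\<Prod>c\<in>{c. c dvd d \<and> c < d}. cyc c)"
  proof (rule prod_dvd_prod_subset)
    show "finite {c. c dvd d \<and> c < d}" by simp
    show "{c. c dvd m} \<subseteq> {c. c dvd d \<and> c < d}"
    proof
      fix c assume "c \<in> {c. c dvd m}"
      then have c: "c dvd m" by simp
      then have "c \<le> m" using m1 by (simp add: dvd_imp_le)
      moreover have "c dvd d" using c dm by simp
      ultimately show "c \<in> {c. c dvd d \<and> c < d}" using mlt by simp
    qed
  qed
  finally have "cyc d * XX m dvd XX d" using cyc_split[OF d] by simp
  then have "cyc d * XX m dvd S * XX m" using XXd by (simp add: mult.commute)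
  then have "cyc d dvd S" using XX_nz[OF m1] by simp
  then obtain k where "S = cyc d * k" by (auto simp: dvd_def)
  then have "poly S 1 = poly (cyc d) 1 * poly k 1" by simp
  moreover have "poly S 1 = int q" unfolding S_def by (rule poly_sum_monom)
  ultimately show ?thesis by (metis dvd_triv_left)
qed


lemma qb_zero: "k > n \<Longrightarrow> qbinom n k = 0"
proof (induction n arbitrary: k)
  case 0 then show ?case by (cases k) auto
next
  case (Suc n) then show ?case by (cases k) auto
qed

lemma qb_one: "poly (qbinom n k) 1 = int (n choose k)"
  by (induction n k rule: qbinom.induct) (auto simp: poly_monom)

definition GG :: "nat \<Rightarrow> int poly" where "GG m = (\<Prod>i<m. XX (Suc i))"

lemma GG_0[simp]: "GG 0 = 1" by (simp add: GG_def)
lemma GG_Suc: "GG (Suc m) = GG m * XX (Suc m)" by (simp add: GG_def)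
lemma GG_nz: "GG m \<noteq> 0" unfolding GG_def using XX_nz by simp

lemma qb_GG: "k \<le> n \<Longrightarrow> qbinom n k * GG k * GG (n - k) = GG n"
proof (induction n arbitrary: k)
  case 0 then show ?case by simp
next
  case (Suc n)
  show ?case
  proof (cases k)
    case 0 then show ?thesis by simp
  next
    case (Suc j)
    have jn: "j \<le> n" using Suc.prems Suc by simp
    show ?thesis
    proof (cases "j = n")
      case True
      have "qbinom n n * GG n = 1 * GG n" using Suc.IH[of n] by simp
      then have q1: "qbinom n n = 1" using GG_nz[of n] by (metis mult_right_cancel)
      show ?thesis using Suc True q1 qb_zero[of n "Suc n"] by (simp add: GG_Suc)
    next
      case False
      then have jl: "j < n" using jn by simp
      have I1: "qbinom n j * GG j * GG (n - j) = GG n" using Suc.IH jn by simp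
      have I2: "qbinom n (Suc j) * GG (Suc j) * GG (n - Suc j) = GG n" using Suc.IH jl by simp
      have nj: "n - j = Suc (n - Suc j)" using jl by simp
      have xa: "XX (Suc n) = monom 1 (Suc j) * XX (n - j) + XX (Suc j)"
        using XX_add[of "n - j" "Suc j"] jl by simp
      have "qbinom (Suc n) k * GG k * GG (Suc n - k)
          = (qbinom n j * GG j * GG (n - j)) * XX (Suc j)
            + monom 1 (Suc j) * (qbinom n (Suc j) * GG (Suc j) * GG (n - Suc j)) * XX (n - j)"
        unfolding Suc by (simp add: GG_Suc nj algebra_simps)
      also have "\<dots> = GG n * XX (Suc n)" unfolding I1 I2 xa by (simp add: algebra_simps)
      finally show ?thesis by (simp add: GG_Suc)
    qed
  qed
qed

lemma Suc_div_ind: "(d::nat) > 0 \<Longrightarrow> Suc m div d = m div d + (if d dvd Suc m then 1 else 0)"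
  by (simp add: div_Suc dvd_eq_mod_eq_0)

lemma GG_cyc: "m \<le> N \<Longrightarrow> GG m = (\<Prod>d\<in>{1..N}. cyc d ^ (m div d))"
proof (induction m)
  case 0 then show ?case by simp
next
  case (Suc m)
  have fin: "finite {1..N}" by simp
  have "{x \<in> {1..N}. x dvd Suc m} = {d. d dvd Suc m}" using Suc.prems
    by (auto intro: Suc_leI dvd_pos_nat dest: dvd_imp_le)
  then have "XX (Suc m) = (\<Prod>d\<in>{1..N}. if d dvd Suc m then cyc d else 1)"
    using cyc_prod[of "Suc m"] prod.inter_filter[OF fin, of cyc "\<lambda>d. d dvd Suc m"] by simp
  then have "GG (Suc m) = (\<Prod>d\<in>{1..N}. cyc d ^ (m div d) * (if d dvd Suc m then cyc d else 1))"
    using Suc by (simp add: GG_Suc prod.distrib)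
  also have "\<dots> = (\<Prod>d\<in>{1..N}. cyc d ^ (Suc m div d))"
    by (rule prod.cong) (auto simp: Suc_div_ind)
  finally show ?case .
qed

lemma div_split3: "(k::nat) \<le> n \<Longrightarrow> d > 0 \<Longrightarrow>
  n div d = k div d + (n - k) div d + (if n mod d < k mod d then 1 else 0)"
proof -
  assume kn: "k \<le> n" and d: "d > 0"
  define b where "b = n - k"
  have n: "n = k + b" using kn b_def by simp
  have ka: "k mod d < d" "b mod d < d" using d by auto
  have e: "n div d = k div d + b div d + (k mod d + b mod d) div d" unfolding n by (rule div_add1_eq)
  have m: "n mod d = (k mod d + b mod d) mod d" unfolding n by (simp add: mod_add_eq)
  show ?thesis
  proof (cases "k mod d + b mod d < d")
    case True
    then show ?thesis using e m by (simp add: b_def)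
  next
    case False
    have lt0: "k mod d + b mod d - d < d" using ka by linarith
    have "(k mod d + b mod d) div d = 1" using False lt0 d
      by (simp add: le_div_geq)
    moreover have "(k mod d + b mod d) mod d = k mod d + b mod d - d"
    proof -
      have lt: "k mod d + b mod d - d < d" using ka by linarith
      have "(k mod d + b mod d) mod d = (k mod d + b mod d - d) mod d" using False by (simp add: le_mod_geq)
      then show ?thesis using lt by simp
    qed
    ultimately show ?thesis using e m ka False by (simp add: b_def, linarith)
  qed
qed

definition TT :: "nat \<Rightarrow> nat \<Rightarrow> nat set" where
  "TT n k = {d \<in> {1..n}. n mod d < k mod d}"

lemma qb_cyc: "k \<le> n \<Longrightarrow> qbinom n k = (\<Prod>d\<in>TT n k. cyc d)"
proof -
  assume kn: "k \<le> n"
  define P where "P = (\<Prod>d\<in>{1..n}. cyc d ^ (k div d + (n - k) div d))"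
  have "qbinom n k * P = GG n"
    using qb_GG[OF kn] GG_cyc[of k n] GG_cyc[of "n - k" n] kn
    by (simp add: P_def prod.distrib power_add mult.assoc)
  also have "GG n = (\<Prod>d\<in>{1..n}. (if n mod d < k mod d then cyc d else 1) * cyc d ^ (k div d + (n - k) div d))"
    unfolding GG_cyc[of n n, OF order_refl]
    by (rule prod.cong) (use div_split3[OF kn] in \<open>auto simp: power_add\<close>)
  also have "\<dots> = (\<Prod>d\<in>TT n k. cyc d) * P"
  proof -
    have "(\<Prod>d\<in>TT n k. cyc d) = (\<Prod>d\<in>{1..n}. if n mod d < k mod d then cyc d else 1)"
      unfolding TT_def by (rule prod.inter_filter) simp
    then show ?thesis unfolding prod.distrib P_def by simp
  qed
  finally have "qbinom n k * P = (\<Prod>d\<in>TT n k. cyc d) * P" .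
  moreover have "P \<noteq> 0" unfolding P_def using cyc_nz by auto
  ultimately show ?thesis by simp
qed

definition SS :: "nat \<Rightarrow> nat set" where "SS n = (\<Union>k\<in>{0..n}. TT n k)"

lemma TT_sub: "TT n k \<subseteq> {2..n}"
proof
  fix d assume "d \<in> TT n k"
  then have d: "1 \<le> d" "d \<le> n" "n mod d < k mod d" unfolding TT_def by auto
  have "d \<noteq> 1" using d(3) by auto
  then show "d \<in> {2..n}" using d by auto
qed

lemma SS_sub: "SS n \<subseteq> {2..n}" unfolding SS_def using TT_sub by blast

lemma TT_ge2: "d \<in> TT n k \<Longrightarrow> 2 \<le> d \<and> d \<le> n" using TT_sub[of n k] by auto
lemma SS_ge2: "d \<in> SS n \<Longrightarrow> 2 \<le> d \<and> d \<le> n" using SS_sub[of n] by auto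

lemma fin_SS: "finite (SS n)" using SS_sub finite_subset by blast

lemma Lq_eq: "Lq n = (\<Prod>d\<in>SS n. cyc d)"
  unfolding Lq_def
proof (rule Lcm_eqI)
  have "lead_coeff (\<Prod>d\<in>SS n. cyc d) = 1"
    unfolding lead_coeff_prod by (rule prod.neutral) (use SS_sub cyc_monic in fastforce)
  then show "normalize (\<Prod>d\<in>SS n. cyc d) = (\<Prod>d\<in>SS n. cyc d)"
    by (intro poly_eqI) simp
next
  fix b assume "b \<in> qbinom n ` {0..n}"
  then obtain k where k: "k \<le> n" "b = qbinom n k" by auto
  then show "b dvd (\<Prod>d\<in>SS n. cyc d)" using qb_cyc[OF k(1)] fin_SS
    by (simp add: SS_def prod_dvd_prod_subset UN_upper)
next
  fix c assume H: "\<And>b. b \<in> qbinom n ` {0..n} \<Longrightarrow> b dvd c"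
  show "(\<Prod>d\<in>SS n. cyc d) dvd c"
  proof (rule prod_pw_coprime_dvd[OF fin_SS])
    fix i assume "i \<in> SS n"
    then obtain k where k: "k \<le> n" "i \<in> TT n k" unfolding SS_def by auto
    have "finite (TT n k)" unfolding TT_def by simp
    then have "cyc i dvd qbinom n k" unfolding qb_cyc[OF k(1)] using k(2) by (rule dvd_prodI)
    moreover have "qbinom n k dvd c" using H k by auto
    ultimately show "cyc i dvd c" by (rule dvd_trans)
  next
    fix i j assume "i \<in> SS n" "j \<in> SS n" "i \<noteq> j"
    moreover have "i \<ge> 1" "j \<ge> 1" using \<open>i \<in> SS n\<close> \<open>j \<in> SS n\<close> SS_sub[of n] by auto
    ultimately show "coprime (cyc i) (cyc j)" by (intro cyc_coprime) auto
  qed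
qed


definition cn :: "nat \<Rightarrow> nat" where "cn d = nat (poly (cyc d) 1)"

lemma cn_int: "d \<ge> 2 \<Longrightarrow> int (cn d) = poly (cyc d) 1"
  using cyc_pos[of d] by (simp add: cn_def)

lemma cn_pos: "d \<ge> 2 \<Longrightarrow> cn d > 0"
  using cyc_pos[of d] by (simp add: cn_def)

lemma binom_cn: "k \<le> n \<Longrightarrow> n choose k = (\<Prod>d\<in>TT n k. cn d)"
proof -
  assume k: "k \<le> n"
  have "int (n choose k) = (\<Prod>d\<in>TT n k. poly (cyc d) 1)"
    using qb_one[of n k] qb_cyc[OF k] by (simp add: poly_prod)
  also have "\<dots> = (\<Prod>d\<in>TT n k. int (cn d))"
    by (rule prod.cong) (auto dest: TT_ge2 simp: cn_int)
  finally show ?thesis by (metis of_nat_eq_iff of_nat_prod)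
qed


lemma Lq_one: "poly (Lq n) 1 = int (\<Prod>d\<in>SS n. cn d)"
proof -
  have "poly (Lq n) 1 = (\<Prod>d\<in>SS n. poly (cyc d) 1)" unfolding Lq_eq by (simp add: poly_prod)
  also have "\<dots> = (\<Prod>d\<in>SS n. int (cn d))"
    by (rule prod.cong) (auto dest: SS_ge2 simp: cn_int)
  finally show ?thesis by simp
qed

lemma only_p_power:
  assumes d: "(d::nat) \<ge> 1" and H: "\<And>q. prime q \<Longrightarrow> q dvd d \<Longrightarrow> q = p"
  shows "\<exists>a. d = p ^ a"
proof -
  have "prime_factors d \<subseteq> {p}" using H d by (auto simp: in_prime_factors_iff)
  then consider "prime_factors d = {}" | "prime_factors d = {p}" by blast
  moreover have eq: "d = (\<Prod>q\<in>prime_factors d. q ^ multiplicity q d)" using d prime_factorization_nat by simp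
  ultimately show ?thesis
  proof cases
    case 1 then have "d = p ^ 0" using eq by simp
    then show ?thesis by blast
  next
    case 2 then have "d = p ^ multiplicity p d" using eq by simp
    then show ?thesis by blast
  qed
qed


lemma mult_cn_zero:
  assumes p: "prime p" and d: "d \<ge> 2" and np: "\<not> (\<exists>a. d = p ^ a)"
  shows "multiplicity p (cn d) = 0"
proof -
  obtain q where q: "prime q" "q dvd d" "q \<noteq> p" using only_p_power[of d p] d np by force
  have "int (cn d) dvd int q" using cyc_dvd_prime[of d q] q d cn_int by simp
  then have cq: "cn d dvd q" by simp
  have "\<not> p dvd cn d"
  proof
    assume "p dvd cn d"
    then have "p dvd q" using cq by (rule dvd_trans)
    then show False using p q primes_dvd_imp_eq by blast
  qed
  then show ?thesis by (rule not_dvd_imp_multiplicity_0)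
qed


lemma mod_pred: "(d::nat) \<ge> 1 \<Longrightarrow> d dvd D \<Longrightarrow> D \<ge> 1 \<Longrightarrow> (D - 1) mod d = d - 1"
proof -
  assume d: "d \<ge> 1" and dD: "d dvd D" and D: "D \<ge> 1"
  obtain t where t: "D = d * t" using dD by auto
  have t1: "t \<ge> 1" using D t by (cases t) auto
  have eq: "D - 1 = (d - 1) + d * (t - 1)" using t t1 d by (cases t) (auto simp: algebra_simps)
  have "(D - 1) mod d = ((d - 1) + d * (t - 1)) mod d" using eq by (simp only:)
  also have "\<dots> = (d - 1) mod d" by (rule mod_mult_self2)
  also have "\<dots> = d - 1" using d by simp
  finally show ?thesis .
qed


lemma witness:
  assumes p: "prime p"
  shows "\<exists>k\<le>n. {d \<in> SS n. \<exists>a. d = p ^ a} \<subseteq> TT n k"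
proof (cases "{d \<in> SS n. \<exists>a. d = p ^ a} = {}")
  case True then show ?thesis by auto
next
  case False
  define A where "A = {d \<in> SS n. \<exists>a. d = p ^ a}"
  have finA: "finite A" unfolding A_def using fin_SS by simp
  define D where "D = Max A"
  have Ane: "A \<noteq> {}" using False unfolding A_def .
  have DA: "D \<in> A" unfolding D_def by (rule Max_in[OF finA Ane])
  then obtain b where b: "D = p ^ b" unfolding A_def by auto
  have "D \<in> SS n" using DA unfolding A_def by simp
  then have Dn: "D \<le> n" "D \<ge> 2" using SS_ge2 by auto
  have p1: "p > 1" using p prime_gt_1_nat by simp
  show ?thesis
  proof (intro exI conjI)
    show "D - 1 \<le> n" using Dn by simp
    show "{d \<in> SS n. \<exists>a. d = p ^ a} \<subseteq> TT n (D - 1)"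
    proof
      fix d assume dA: "d \<in> {d \<in> SS n. \<exists>a. d = p ^ a}"
      then obtain a where a: "d = p ^ a" by auto
      have "d \<le> D" using dA finA unfolding D_def A_def by (simp add: Max_ge)
      then have "a \<le> b" using a b p1 by simp
      then have dD: "d dvd D" using a b by (simp add: le_imp_power_dvd)
      have dS: "d \<in> SS n" using dA by simp
      then have d2: "d \<in> {2..n}" using SS_ge2 by auto
      have km: "(D - 1) mod d = d - 1" using mod_pred[OF _ dD] d2 Dn by simp
      obtain k' where k': "k' \<le> n" "d \<in> TT n k'" using dS unfolding SS_def by auto
      then have "n mod d < k' mod d" unfolding TT_def by simp
      moreover have "k' mod d < d" using d2 by simp
      ultimately have "n mod d < (D - 1) mod d" using km by simp
      then show "d \<in> TT n (D - 1)" using d2 unfolding TT_def by simp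
    qed
  qed
qed


lemma binom_Lcm: "Lcm ((\<lambda>k. n choose k) ` {0..n}) = (\<Prod>d\<in>SS n. cn d)"
proof (rule dvd_antisym)
  show "Lcm ((\<lambda>k. n choose k) ` {0..n}) dvd (\<Prod>d\<in>SS n. cn d)"
  proof (rule Lcm_least)
    fix b assume "b \<in> (\<lambda>k. n choose k) ` {0..n}"
    then obtain k where k: "k \<le> n" "b = n choose k" by auto
    then show "b dvd (\<Prod>d\<in>SS n. cn d)" using binom_cn[OF k(1)] fin_SS
      by (simp add: SS_def prod_dvd_prod_subset UN_upper)
  qed
next
  define R where "R = (\<Prod>d\<in>SS n. cn d)"
  define M where "M = Lcm ((\<lambda>k. n choose k) ` {0..n})"
  have M0: "M \<noteq> 0" unfolding M_def by (subst Lcm_0_iff) auto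
  have cn0: "0 \<notin> cn ` SS n" using cn_pos by (force dest: SS_ge2)
  have "R \<noteq> 0" unfolding R_def using cn0 by (auto simp: fin_SS)
  moreover have "multiplicity p R \<le> multiplicity p M" if p: "prime p" for p
  proof -
    obtain k where k: "k \<le> n" "{d \<in> SS n. \<exists>a. d = p ^ a} \<subseteq> TT n k" using witness[OF p] by blast
    have finT: "finite (TT n k)" unfolding TT_def by simp
    have cnT: "0 \<notin> cn ` TT n k" using cn_pos by (force dest: TT_ge2)
    have "multiplicity p R = (\<Sum>d\<in>SS n. multiplicity p (cn d))"
      unfolding R_def using p cn0 fin_SS by (simp add: prime_elem_multiplicity_prod_distrib)
    also have "\<dots> = (\<Sum>d\<in>{d \<in> SS n. \<exists>a. d = p ^ a}. multiplicity p (cn d))"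
    proof (rule sum.mono_neutral_right)
      show "finite (SS n)" by (rule fin_SS)
      show "{d \<in> SS n. \<exists>a. d = p ^ a} \<subseteq> SS n" by blast
      show "\<forall>i\<in>SS n - {d \<in> SS n. \<exists>a. d = p ^ a}. multiplicity p (cn i) = 0"
      proof
        fix i assume i: "i \<in> SS n - {d \<in> SS n. \<exists>a. d = p ^ a}"
        then have "2 \<le> i" using SS_ge2 by blast
        moreover have "\<not> (\<exists>a. i = p ^ a)" using i by blast
        ultimately show "multiplicity p (cn i) = 0" by (rule mult_cn_zero[OF p])
      qed
    qed
    also have "\<dots> \<le> (\<Sum>d\<in>TT n k. multiplicity p (cn d))"
      by (rule sum_mono2[OF finT k(2)]) simp
    also have "\<dots> = multiplicity p (n choose k)"
      using binom_cn[OF k(1)] p cnT finT by (simp add: prime_elem_multiplicity_prod_distrib)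
    also have "\<dots> \<le> multiplicity p M"
      by (rule dvd_imp_multiplicity_le[OF _ M0]) (use k in \<open>auto simp: M_def\<close>)
    finally show ?thesis .
  qed
  ultimately show "R dvd M" by (rule multiplicity_le_imp_dvd)
qed


lemma poly_of_int_real: "poly (map_poly (of_int :: int \<Rightarrow> real) p) (of_int x) = of_int (poly p x)"
  by (induction p) (simp_all add: map_poly_pCons)

theorem mainTheorem5:
  fixes n :: nat
  assumes "n \<ge> 1"
  shows "poly (Lq n) 1 = int (Lcm ((\<lambda>k. n choose k) ` {0..n}))
         \<and> ((\<lambda>q::real. poly (map_poly of_int (Lq n)) q)
              \<longlongrightarrow> real (Lcm ((\<lambda>k. n choose k) ` {0..n}))) (at 1)"
proof
  show e: "poly (Lq n) 1 = int (Lcm ((\<lambda>k. n choose k) ` {0..n}))"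
    using Lq_one binom_Lcm by simp
  have "((\<lambda>q::real. poly (map_poly of_int (Lq n)) q) \<longlongrightarrow> poly (map_poly of_int (Lq n)) 1) (at 1)"
    by (intro tendsto_intros)
  moreover have "poly (map_poly (of_int :: int \<Rightarrow> real) (Lq n)) 1 = real (Lcm ((\<lambda>k. n choose k) ` {0..n}))"
    using e poly_of_int_real[of "Lq n" 1] by simp
  ultimately show "((\<lambda>q::real. poly (map_poly of_int (Lq n)) q)
              \<longlongrightarrow> real (Lcm ((\<lambda>k. n choose k) ` {0..n}))) (at 1)" by simp
qed


end
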